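(* Let $\gamma_n=o(n)$ and $\lambda_n=\Omega(\sqrt{n})$. Let $K:\mathbb{N}_0\to\mathbb{N}_0$, $n\mapsto K_n$, be a scaling and let \[ r_3(\gamma_n,\lambda_n) = 1+\frac{\log(1+\gamma_n/\lambda_n)}{\log 2 + 1/2}. \] If $K_n > r_3(\gamma_n,\lambda_n)$ for all $n$, then \[ \lim_{n\to\infty} \mathbb{P}\big[\,|C_{max}(n,K_n,\gamma_n)| > n-\gamma_n-\lambda_n\,\big] = 1. \]
   Context: Random K-out graph $\mathbb{H}(n;K_n)$: on vertex set $V=\{v_1,\dots,v_n\}$ with labels $\mathcal{N}=\{1,\dots,n\}$, each node $v_i$ independently selects a set $\Gamma_{n,i}\subseteq \mathcal{N}\setminus\{i\}$ of $K_n$ distinct labels uniformly at random (the sets $\Gamma_{n,1},\dots,\Gamma_{n,n}$ are mutually independent). Distinct nodes $v_i,v_j$ are adjacent if $j\in\Gamma_{n,i}$ or $i\in\Gamma_{n,j}$ (undirected graph). The graph $\mathbb{H}(n;K_n,\gamma_n)$ is obtained by choosing a set $D\subset V$ of $\gamma_n$ nodes uniformly at random and deleting them: it has vertex set $R=V\setminus D$, and two distinct vertices of $R$ are adjacent iff they are adjacent in $\mathbb{H}(n;K_n)$. $C_{max}(n,K_n,\gamma_n)$ denotes the vertex set of a largest connected component of $\mathbb{H}(n;K_n,\gamma_n)$. $\log$ is the natural logarithm; Landau notation is as $n\to\infty$. *)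

theory Defs
  imports "HOL-Probability.Probability" "HOL-Library.Landau_Symbols"
begin

text \<open>Random K-out graph on labels 1..n: node i picks a uniformly random K-subset of
  {1..n} - {i}; the choices are mutually independent (product pmf).\<close>

definition kout_adj :: "(nat \<Rightarrow> nat set) \<Rightarrow> nat \<Rightarrow> nat \<Rightarrow> bool" where
  "kout_adj G i j \<longleftrightarrow> i \<noteq> j \<and> (j \<in> G i \<or> i \<in> G j)"

definition surv_adj :: "(nat \<Rightarrow> nat set) \<Rightarrow> nat set \<Rightarrow> nat \<Rightarrow> nat \<Rightarrow> bool" where
  "surv_adj G R i j \<longleftrightarrow> i \<in> R \<and> j \<in> R \<and> kout_adj G i j"

definition component :: "(nat \<Rightarrow> nat set) \<Rightarrow> nat set \<Rightarrow> nat \<Rightarrow> nat set" where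
  "component G R v = {u \<in> R. (surv_adj G R)\<^sup>*\<^sup>* v u}"

definition cmax_size :: "(nat \<Rightarrow> nat set) \<Rightarrow> nat set \<Rightarrow> nat" where
  "cmax_size G R = Max (insert 0 ((\<lambda>v. card (component G R v)) ` R))"

definition selection_pmf :: "nat \<Rightarrow> nat \<Rightarrow> (nat \<Rightarrow> nat set) pmf" where
  "selection_pmf n K =
     Pi_pmf {1..n} {} (\<lambda>i. pmf_of_set {S. S \<subseteq> {1..n} - {i} \<and> card S = K})"

definition deletion_pmf :: "nat \<Rightarrow> nat \<Rightarrow> nat set pmf" where
  "deletion_pmf n g = pmf_of_set {D. D \<subseteq> {1..n} \<and> card D = g}"

definition prob_cmax_gt :: "nat \<Rightarrow> nat \<Rightarrow> nat \<Rightarrow> real \<Rightarrow> real" where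
  "prob_cmax_gt n K g t =
     measure_pmf.prob (pair_pmf (selection_pmf n K) (deletion_pmf n g))
       {(G, D). real (cmax_size G ({1..n} - D)) > t}"

definition r3 :: "real \<Rightarrow> real \<Rightarrow> real" where
  "r3 g l = 1 + ln (1 + g / l) / (ln 2 + 1/2)"

end

theory Submission
  imports Defs
begin

definition closed_set :: "(nat \<Rightarrow> nat set) \<Rightarrow> nat set \<Rightarrow> nat set \<Rightarrow> bool" where
  "closed_set G R S \<longleftrightarrow> S \<subseteq> R \<and> (\<forall>u\<in>S. \<forall>w\<in>R - S. \<not> kout_adj G u w)"

lemma kout_adj_sym: "kout_adj G u w \<longleftrightarrow> kout_adj G w u"
  unfolding kout_adj_def by auto

lemma closed_compl: "closed_set G R S \<Longrightarrow> closed_set G R (R - S)"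
  unfolding closed_set_def using kout_adj_sym by blast

lemma closed_union: "closed_set G R S \<Longrightarrow> closed_set G R T \<Longrightarrow> closed_set G R (S \<union> T)"
  unfolding closed_set_def by blast

lemma component_sub: "component G R v \<subseteq> R"
  unfolding component_def by auto

lemma component_self: "v \<in> R \<Longrightarrow> v \<in> component G R v"
  unfolding component_def by auto

lemma component_closed: "closed_set G R (component G R v)"
  unfolding closed_set_def component_def surv_adj_def
  by (auto intro: rtranclp.rtrancl_into_rtrancl)

lemma reach_not_in_closed:
  assumes "(surv_adj G R)\<^sup>*\<^sup>* v w" "closed_set G R S" "v \<notin> S"
  shows "w \<notin> S"
  using assms(1)
proof (induction rule: rtranclp_induct)
  case base then show ?case using assms by simp
next
  case (step y z)
  then show ?case using assms(2) unfolding closed_set_def surv_adj_def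
    using kout_adj_sym by blast
qed

lemma component_disj: "closed_set G R S \<Longrightarrow> v \<notin> S \<Longrightarrow> component G R v \<inter> S = {}"
  unfolding component_def using reach_not_in_closed by blast

lemma exists_closed:
  fixes lam :: real
  assumes fin: "finite R" and lampos: "lam > 0" and lamr: "lam \<le> real (card R)"
    and comp: "\<forall>v\<in>R. real (card (component G R v)) \<le> real (card R) - lam"
  shows "\<exists>S. closed_set G R S \<and> lam \<le> 2 * real (card S) \<and> 2 * card S \<le> card R"
proof -
  define F where "F = {S. closed_set G R S \<and> 2 * card S \<le> card R}"
  have finF: "finite F" unfolding F_def closed_set_def using fin
    by (rule_tac finite_subset[of _ "Pow R"]) auto
  have "{} \<in> F" unfolding F_def closed_set_def by auto
  then have neF: "F \<noteq> {}" by auto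
  have "Max (card ` F) \<in> card ` F" using finF neF by (intro Max_in) auto
  then obtain S where SF: "S \<in> F" and SM: "card S = Max (card ` F)" by auto
  have Smax: "\<forall>T\<in>F. card T \<le> card S" unfolding SM using finF by auto
  have Scl: "closed_set G R S" and S2: "2 * card S \<le> card R" using SF unfolding F_def by auto
  have SR: "S \<subseteq> R" using Scl unfolding closed_set_def by auto
  show ?thesis
  proof (rule ccontr)
    assume neg: "\<not> ?thesis"
    have small: "2 * real (card S) < lam"
    proof (rule ccontr)
      assume "\<not> 2 * real (card S) < lam"
      then have "lam \<le> 2 * real (card S)" by simp
      with Scl S2 neg show False by blast
    qed
    then have "card S < card R" using lamr by linarith
    then obtain v where v: "v \<in> R" "v \<notin> S" using SR
      by (metis card_mono fin not_less subsetI subset_antisym)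
    define C where "C = component G R v"
    have Ccl: "closed_set G R C" unfolding C_def by (rule component_closed)
    have CR: "C \<subseteq> R" unfolding C_def by (rule component_sub)
    have vC: "v \<in> C" unfolding C_def using v(1) by (rule component_self)
    have CS: "C \<inter> S = {}" unfolding C_def using component_disj Scl v by blast
    have finC: "finite C" "finite S" using CR SR fin finite_subset by auto
    have cardU: "card (S \<union> C) = card S + card C" using CS finC by (simp add: card_Un_disjoint inf_commute)
    have Cle: "real (card C) \<le> real (card R) - lam" using comp v unfolding C_def by auto
    have Cpos: "card C \<ge> 1" using vC finC by (metis One_nat_def Suc_leI card_gt_0_iff empty_iff)
    show False
    proof (cases "2 * card (S \<union> C) \<le> card R")
      case True
      then have "S \<union> C \<in> F" unfolding F_def using closed_union[OF Scl Ccl] by auto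
      then show False using Smax cardU Cpos by fastforce
    next
      case False
      define T where "T = R - (S \<union> C)"
      have Tcl: "closed_set G R T" unfolding T_def by (rule closed_compl[OF closed_union[OF Scl Ccl]])
      have cardT: "card T = card R - card (S \<union> C)" unfolding T_def
        using SR CR fin by (simp add: card_Diff_subset finite_subset)
      have "card (S \<union> C) \<le> card R" using SR CR fin by (simp add: card_mono)
      then have cT: "real (card T) = real (card R) - real (card S) - real (card C)"
        using cardT cardU by simp
      have "2 * card T \<le> card R" using False cardT cardU by simp
      then have "T \<in> F" unfolding F_def using Tcl by auto
      moreover have "card T > card S" using cT Cle small by linarith
      ultimately show False using Smax by fastforce
    qed
  qed
qed

lemma choose_suc_real: "real (Suc a choose Suc K) = real (Suc a) * real (a choose K) / real (Suc K)"
proof -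
  have "real (Suc a * (a choose K)) = real ((Suc a choose Suc K) * Suc K)"
    by (simp only: Suc_times_binomial_eq)
  then have "real (Suc a) * real (a choose K) = real (Suc a choose Suc K) * real (Suc K)"
    by (simp only: of_nat_mult)
  then show ?thesis by (simp add: eq_divide_eq del: of_nat_Suc)
qed

lemma choose_ratio:
  "a \<le> b \<Longrightarrow> K \<le> b \<Longrightarrow> real (a choose K) / real (b choose K) \<le> (real a / real b)^K"
proof (induction K arbitrary: a b)
  case 0
  then show ?case by simp
next
  case (Suc K)
  obtain b' where b: "b = Suc b'" using Suc.prems by (cases b) auto
  show ?case
  proof (cases a)
    case 0
    then show ?thesis by simp
  next
    case (Suc a')
    have IH: "real (a' choose K) / real (b' choose K) \<le> (real a' / real b')^K"
      using Suc.IH[of a' b'] Suc.prems b Suc by simp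
    have e1: "real (a choose Suc K) = real a * real (a' choose K) / real (Suc K)"
      unfolding Suc by (rule choose_suc_real)
    have e2: "real (b choose Suc K) = real b * real (b' choose K) / real (Suc K)"
      unfolding b by (rule choose_suc_real)
    have pos: "real (b' choose K) > 0" using Suc.prems b by simp
    have bpos: "real b > 0" using b by simp
    have "real (a choose Suc K) / real (b choose Suc K) = (real a / real b) * (real (a' choose K) / real (b' choose K))"
      unfolding e1 e2 using pos bpos by (simp add: divide_simps del: of_nat_Suc)
    also have "\<dots> \<le> (real a / real b) * (real a' / real b')^K"
      by (intro mult_left_mono IH) auto
    also have "(real a' / real b') \<le> real a / real b"
    proof (cases "b' = 0")
      case True then show ?thesis by simp
    next
      case False
      then show ?thesis using Suc.prems b Suc by (simp add: divide_simps algebra_simps)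
    qed
    then have "(real a' / real b')^K \<le> (real a / real b)^K"
      by (intro power_mono) auto
    then have "(real a / real b) * (real a' / real b')^K \<le> (real a / real b) * (real a / real b)^K"
      by (intro mult_left_mono) auto
    finally show ?thesis by simp
  qed
qed
lemma prob_avoid:
  assumes "finite A" "T \<subseteq> A" "K \<le> card A"
  shows "measure_pmf.prob (pmf_of_set {S. S \<subseteq> A \<and> card S = K}) {X. X \<inter> T = {}}
          \<le> ((real (card A) - real (card T)) / real (card A))^K"
proof -
  define F where "F = {S. S \<subseteq> A \<and> card S = K}"
  have cF: "card F = card A choose K" unfolding F_def using n_subsets[OF assms(1)] .
  have finF: "finite F" unfolding F_def using assms(1) by (rule_tac finite_subset[of _ "Pow A"]) auto
  have "card F > 0" using cF assms(3) by simp
  then have neF: "F \<noteq> {}" by auto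
  have eq: "F \<inter> {X. X \<inter> T = {}} = {S. S \<subseteq> A - T \<and> card S = K}" unfolding F_def by auto
  have cT: "card (A - T) = card A - card T" using assms by (simp add: card_Diff_subset finite_subset)
  have "measure_pmf.prob (pmf_of_set F) {X. X \<inter> T = {}} = real (card (F \<inter> {X. X \<inter> T = {}})) / real (card F)"
    using measure_pmf_of_set[OF neF finF] by simp
  also have "\<dots> = real ((card A - card T) choose K) / real (card A choose K)"
    unfolding eq cF using n_subsets[of "A - T" K] assms(1) cT by simp
  also have "\<dots> \<le> (real (card A - card T) / real (card A))^K"
    by (rule choose_ratio) (use assms in auto)
  also have "real (card A - card T) = real (card A) - real (card T)"
    using assms by (simp add: card_mono of_nat_diff)
  finally show ?thesis unfolding F_def .
qed

lemma pow_fact_le_exp: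
  fixes x :: real assumes "x \<ge> 0"
  shows "x ^ m / fact m \<le> exp x"
proof -
  have e: "(\<lambda>n. x^n /\<^sub>R fact n) = (\<lambda>n. x^n / fact n)" by (simp add: divide_inverse_commute)
  have s: "(\<lambda>n. x^n / fact n) sums exp x" using exp_converges[of x] unfolding e .
  have "(\<Sum>n\<in>{m}. x^n / fact n) \<le> suminf (\<lambda>n. x^n / fact n)"
    by (rule sum_le_suminf) (use s assms in \<open>auto simp: sums_iff\<close>)
  then show ?thesis using s by (simp add: sums_iff)
qed

lemma choose_le_exp:
  assumes "m \<ge> 1"
  shows "real (r choose m) \<le> (exp 1 * real r / real m)^m"
proof (cases "m \<le> r")
  case False
  then show ?thesis by (simp add: binomial_eq_0)
next
  case True
  have d: "fact (r - m) dvd (fact r :: nat)" by (rule fact_dvd) simp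
  have "real (fact r div fact (r - m)) \<le> real (r ^ m)"
    using fact_div_fact_le_pow[OF True] by (simp only: of_nat_le_iff)
  moreover have "real (fact r div fact (r - m)) = fact r / fact (r - m)"
    using d by (simp add: real_of_nat_div)
  ultimately have f1: "fact r / fact (r - m) \<le> (real r) ^ m" by simp
  have bf: "real (r choose m) = fact r / (fact m * fact (r - m))"
    using binomial_fact[OF True] by simp
  have h1': "real (r choose m) \<le> real r ^ m / fact m"
  proof -
    have "real (r choose m) = (fact r / fact (r - m)) / fact m" using bf by (simp add: divide_divide_eq_left mult.commute)
    also have "\<dots> \<le> real r ^ m / fact m" using f1 by (rule divide_right_mono) simp
    finally show ?thesis .
  qed
  have h2: "real m ^ m / fact m \<le> exp (real m)" by (rule pow_fact_le_exp) simp
  have mpos: "real m > 0" using assms by simp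
  have h3: "1 / fact m \<le> exp (real m) / real m ^ m" using h2 mpos by (simp add: field_simps)
  have "real r ^ m / fact m = real r ^ m * (1 / fact m)" by simp
  also have "\<dots> \<le> real r ^ m * (exp (real m) / real m ^ m)" by (intro mult_left_mono h3) auto
  also have "exp (real m) = exp 1 ^ m" by (simp add: exp_of_nat_mult[symmetric])
  also have "real r ^ m * (exp 1 ^ m / real m ^ m) = (exp 1 * real r / real m)^m"
    by (simp add: power_divide power_mult_distrib)
  finally show ?thesis using h1' by linarith
qed

lemma pair_bound:
  fixes p :: "'a pmf" and q :: "'b pmf"
  assumes "\<And>D. D \<in> set_pmf q \<Longrightarrow> measure_pmf.prob p {G. (G, D) \<in> A} \<le> e"
  shows "measure_pmf.prob (pair_pmf p q) A \<le> e"
proof -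
  have e0: "e \<ge> 0"
  proof -
    obtain D where "D \<in> set_pmf q" using set_pmf_not_empty[of q] by blast
    then show ?thesis using assms[of D] measure_nonneg[of p] by (meson order_trans)
  qed
  have "emeasure (measure_pmf (pair_pmf p q)) A = emeasure (measure_pmf (pair_pmf q p)) ((\<lambda>(x, y). (y, x)) -` A)"
    by (subst pair_commute_pmf) (simp add: emeasure_map_pmf)
  also have "\<dots> = (\<integral>\<^sup>+D. \<integral>\<^sup>+G. indicator ((\<lambda>(x, y). (y, x)) -` A) (D, G) \<partial>p \<partial>q)"
    by (subst nn_integral_pair_pmf'[symmetric]) (simp add: nn_integral_indicator)
  also have "\<dots> = (\<integral>\<^sup>+D. emeasure (measure_pmf p) {G. (G, D) \<in> A} \<partial>q)"
  proof (intro nn_integral_cong)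
    fix D
    have "(\<lambda>G. indicator ((\<lambda>(x, y). (y, x)) -` A) (D, G)) = (indicator {G. (G, D) \<in> A} :: _ \<Rightarrow> ennreal)"
      by (auto split: split_indicator)
    then show "(\<integral>\<^sup>+G. indicator ((\<lambda>(x, y). (y, x)) -` A) (D, G) \<partial>p) = emeasure (measure_pmf p) {G. (G, D) \<in> A}"
      by simp
  qed
  also have "\<dots> \<le> (\<integral>\<^sup>+D. ennreal e \<partial>q)"
  proof (intro nn_integral_mono_AE AE_pmfI)
    fix D assume "D \<in> set_pmf q"
    then show "emeasure (measure_pmf p) {G. (G, D) \<in> A} \<le> ennreal e"
      using assms[of D] by (simp add: measure_pmf.emeasure_eq_measure ennreal_leI)
  qed
  also have "\<dots> = ennreal e" by simp
  finally have "emeasure (measure_pmf (pair_pmf p q)) A \<le> ennreal e" .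
  then show ?thesis using e0 by (simp add: measure_pmf.emeasure_eq_measure)
qed

lemma pow_le_self: "0 \<le> (x::real) \<Longrightarrow> x \<le> 1 \<Longrightarrow> 1 \<le> k \<Longrightarrow> x^k \<le> x"
  using power_decreasing[of 1 k x] by simp

lemma b_bound:
  fixes g u E H :: real and k :: nat
  assumes g: "0 \<le> g" "g \<le> 1/1000" and u: "0 < u" "u \<le> 1/2" and k: "k \<ge> 1"
    and E: "0 < E" "E \<le> 33/20" and H: "1 \<le> H" "H \<le> E" "H^2 \<le> 1002/1000"
    and X: "1 + g / u \<le> 2 * (2 * E)^k"
  shows "E^2 * (g + u)^(Suc k) / u * (H / E)^(Suc k) \<le> 9/10"
proof -
  have eq: "E^2 * (g + u)^(Suc k) / u * (H / E)^(Suc k) = E * H * (1 + g / u) * ((g + u) * H / E)^k"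
  proof -
    have p: "((g + u) * H / E)^k = (g+u)^k * (H/E)^k"
      by (simp add: power_mult_distrib[symmetric] times_divide_eq_right)
    have q: "1 + g / u = (g + u) / u" using u by (simp add: field_simps)
    show ?thesis unfolding p q power_Suc using u E
      by (simp add: field_simps power2_eq_square)
  qed
  have H0: "H > 0" using H by simp
  show ?thesis
  proof (cases "u \<le> 1/8")
    case True
    have "E * H * (1 + g / u) * ((g + u) * H / E)^k \<le> E * H * (2 * (2 * E)^k) * ((g + u) * H / E)^k"
      using X E H0 u g by (intro mult_right_mono mult_left_mono) auto
    also have "\<dots> = 2 * E * H * ((2 * E)^k * ((g + u) * H / E)^k)" by (simp add: ac_simps)
    also have "(2 * E)^k * ((g + u) * H / E)^k = (2 * (g + u) * H)^k"
    proof -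
      have "(2*E)*((g+u)*H/E) = 2*(g+u)*H" using E by simp
      then show ?thesis by (metis power_mult_distrib)
    qed
    also have "(2 * (g + u) * H)^k \<le> (2 * (g + 1/8) * H)^k"
      using True g u H0 by (intro power_mono mult_right_mono) auto
    also have "(2 * (g + 1/8) * H)^k \<le> 2 * (g + 1/8) * H"
    proof -
      have "H \<le> 2" using H E by linarith
      then have "2 * (g + 1/8) * H \<le> 2 * (1/1000 + 1/8) * 2" using g H0
        by (intro mult_mono) auto
      then have "2 * (g + 1/8) * H \<le> 1" by (rule order_trans) simp
      then show ?thesis using k g H0 by (intro pow_le_self) auto
    qed
    finally have "E * H * (1 + g / u) * ((g + u) * H / E)^k \<le> 2 * E * H * (2 * (g + 1/8) * H)"
      using E H0 by (simp add: mult_left_mono)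
    also have "\<dots> = 4 * E * H^2 * (g + 1/8)" by (simp add: power2_eq_square)
    also have "\<dots> \<le> 4 * (33/20) * (1002/1000) * (1/1000 + 1/8)"
      using E H g by (intro mult_mono) auto
    also have "\<dots> \<le> 9/10" by simp
    finally show ?thesis using eq by simp
  next
    case False
    have "g * 1 \<le> g * (8 * u)" using False g by (intro mult_left_mono) auto
    then have gu: "g / u \<le> 8 * g" using u by (simp add: divide_simps ac_simps)
    have "E * H * (1 + g / u) * ((g + u) * H / E)^k \<le> E * H * (1 + 8 * g) * ((g + u) * H / E)^k"
      using gu E H0 u g by (intro mult_right_mono mult_left_mono) auto
    also have "((g + u) * H / E)^k \<le> (g + u) * H / E"
    proof -
      have "(g + u) * H \<le> 1 * E" using g u H H0 by (intro mult_mono) auto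
      then have "(g + u) * H / E \<le> 1" using E by (simp add: divide_simps)
      moreover have "(g + u) * H / E \<ge> 0" using g u H0 E by simp
      ultimately show ?thesis using k by (intro pow_le_self) auto
    qed
    then have "E * H * (1 + 8 * g) * ((g + u) * H / E)^k \<le> E * H * (1 + 8 * g) * ((g + u) * H / E)"
      using E H0 g by (intro mult_left_mono) auto
    also have "\<dots> = H^2 * (1 + 8 * g) * (g + u)" using E by (simp add: field_simps power2_eq_square)
    also have "\<dots> \<le> (1002/1000) * (1 + 8/1000) * (1/1000 + 1/2)"
      using H g u by (intro mult_mono) auto
    also have "\<dots> \<le> 9/10" by simp
    finally show ?thesis using eq by simp
  qed
qed

lemma exp_half_le: "exp (1/2::real) \<le> 33/20"
proof -
  have "exp (1/2::real)^2 = exp 1" by (simp add: power2_eq_square exp_add[symmetric])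
  also have "\<dots> < (33/20)^2"
  proof -
    have "(33/20::real)^2 = 1089/400" by (simp add: power2_eq_square)
    then show ?thesis using e_less_272 by linarith
  qed
  finally show ?thesis by (rule power2_less_imp_less[THEN less_imp_le]) simp
qed

lemma exp_small_le: assumes "0 \<le> g" "g \<le> (1/1000::real)" shows "exp g \<le> 1002/1000"
proof -
  have "1 - g \<le> exp (-g)" using exp_ge_add_one_self[of "-g"] by simp
  then have "exp g * (1 - g) \<le> exp g * exp (-g)" by (intro mult_left_mono) auto
  then have "exp g * (1 - g) \<le> 1" by (simp add: exp_minus)
  moreover have "exp g * (999/1000) \<le> exp g * (1 - g)" using assms by (intro mult_left_mono) auto
  ultimately have "exp g * (999/1000) \<le> 1" by linarith
  then show ?thesis by simp
qed

lemma key_ineq: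
  fixes n g m K :: nat and lam :: real
  assumes n: "n \<ge> 1" and m: "m \<ge> 1" and mr: "2 * m \<le> n - g" and gn: "real g \<le> real n / 1000"
    and K: "K \<ge> 2" and lam: "lam > 0" "lam \<le> 2 * real m"
    and X: "1 + real g / lam \<le> (2 * exp (1/2))^(K - 1)"
  shows "real ((n - g) choose m) * (((real g + real m) / real n)^K)^m * ((1 - real m / real n)^K)^(n - g - m) \<le> (9/10)^m"
proof -
  define r where "r = n - g"
  have gle: "g \<le> n" using gn n by simp
  have rr: "real r = real n - real g" unfolding r_def using gle by simp
  have npos: "real n > 0" using n by simp
  have mpos: "real m > 0" using m by simp
  have mr': "2 * real m \<le> real r" using mr unfolding r_def by linarith
  define E where "E = exp (1/2::real)"
  define H where "H = exp (real g / real n / 2)"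
  define b where "b = exp 1 * (real n / real m) * ((real g + real m) / real n)^K * exp (- real K * real r / (2 * real n))"
  have a0: "0 \<le> 1 - real m / real n" using mr' rr npos gle by (simp add: field_simps)
  have step1: "((1 - real m / real n)^K)^(r - m) \<le> exp (- real K * real r / (2 * real n))^m"
  proof -
    have "((1 - real m / real n)^K)^(r - m) \<le> (exp (- real m / real n)^K)^(r - m)"
      using a0 exp_ge_add_one_self[of "- real m / real n"] by (intro power_mono) auto
    also have "\<dots> = exp (- real m / real n * real K * real (r - m))"
      by (simp add: exp_of_nat_mult[symmetric] power_mult[symmetric] ac_simps)
    also have "\<dots> \<le> exp (- real K * real r / (2 * real n) * real m)"
    proof -
      have rm: "real (r - m) \<ge> real r / 2" using mr' by (simp add: of_nat_diff)
      have "real m / real n * real K * (real r / 2) \<le> real m / real n * real K * real (r - m)"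
        using rm npos mpos by (intro mult_left_mono) auto
      then show ?thesis using npos by (simp add: field_simps)
    qed
    also have "\<dots> = exp (- real K * real r / (2 * real n))^m"
      by (simp add: exp_of_nat_mult[symmetric] ac_simps)
    finally show ?thesis .
  qed
  have step2: "real (r choose m) \<le> (exp 1 * real n / real m)^m"
  proof -
    have "real (r choose m) \<le> (exp 1 * real r / real m)^m" using choose_le_exp m by simp
    also have "\<dots> \<le> (exp 1 * real n / real m)^m"
      using rr mpos by (intro power_mono divide_right_mono mult_left_mono) auto
    finally show ?thesis .
  qed
  have b_eq: "b = E^2 * (real g / real n + real m / real n)^(Suc (K - 1)) / (real m / real n) * (H / E)^(Suc (K - 1))"
  proof -
    have SK: "Suc (K - 1) = K" using K by simp
    have e2: "E^2 = exp 1" unfolding E_def by (simp add: power2_eq_square exp_add[symmetric])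
    have he: "(H / E)^K = exp (- real K * real r / (2 * real n))"
    proof -
      have "H / E = exp (real g / real n / 2 - 1/2)" unfolding H_def E_def by (simp add: exp_diff)
      then have "(H / E)^K = exp (real K * (real g / real n / 2 - 1/2))" by (simp add: exp_of_nat_mult[symmetric])
      also have "real K * (real g / real n / 2 - 1/2) = - real K * real r / (2 * real n)"
        using npos by (simp add: rr field_simps)
      finally show ?thesis .
    qed
    have "real g / real n + real m / real n = (real g + real m) / real n" by (simp add: add_divide_distrib)
    then show ?thesis unfolding SK he e2 b_def using npos mpos by simp
  qed
  have bb: "b \<le> 9/10"
    unfolding b_eq
  proof (rule b_bound)
    show "0 \<le> real g / real n" by simp
    show "real g / real n \<le> 1/1000" using gn npos by (simp add: field_simps)
    show "0 < real m / real n" using npos mpos by simp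
    show "real m / real n \<le> 1/2" using mr' rr npos by (simp add: field_simps)
    show "1 \<le> K - 1" using K by simp
    show "0 < E" unfolding E_def by simp
    show "E \<le> 33/20" unfolding E_def by (rule exp_half_le)
    show "1 \<le> H" unfolding H_def by simp
    show "H \<le> E" unfolding H_def E_def using gn npos by (simp add: field_simps)
    show "H^2 \<le> 1002/1000"
    proof -
      have "H^2 = exp (real g / real n)" unfolding H_def by (simp add: power2_eq_square exp_add[symmetric])
      also have "\<dots> \<le> 1002/1000" using gn npos by (intro exp_small_le) (auto simp: field_simps)
      finally show ?thesis .
    qed
    show "1 + real g / real n / (real m / real n) \<le> 2 * (2 * E)^(K - 1)"
    proof -
      have "real g / real n / (real m / real n) = real g / real m" using npos by simp
      also have "\<dots> \<le> 2 * (real g / lam)"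
        using lam mpos by (simp add: field_simps) (metis mult.commute mult_left_mono of_nat_0_le_iff)
      finally have "real g / real n / (real m / real n) \<le> 2 * (real g / lam)" .
      moreover have "\<And>a b::real. a \<le> 2 * b \<Longrightarrow> 1 + a \<le> 2 * (1 + b)" by (simp add: algebra_simps)
      ultimately have "1 + real g / real n / (real m / real n) \<le> 2 * (1 + real g / lam)" by blast
      also have "\<dots> \<le> 2 * (2 * E)^(K - 1)" using X unfolding E_def by simp
      finally show ?thesis .
    qed
  qed
  have b0: "b \<ge> 0" unfolding b_def using npos mpos by simp
  have "real (r choose m) * (((real g + real m) / real n)^K)^m * ((1 - real m / real n)^K)^(r - m)
        \<le> (exp 1 * real n / real m)^m * (((real g + real m) / real n)^K)^m * exp (- real K * real r / (2 * real n))^m"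
    using step1 step2 a0 by (intro mult_mono) auto
  also have "\<dots> = b^m"
  proof -
    have "b = (exp 1 * real n / real m) * ((real g + real m) / real n)^K * exp (- real K * real r / (2 * real n))"
      unfolding b_def by simp
    then show ?thesis by (simp only: power_mult_distrib)
  qed
  also have "\<dots> \<le> (9/10)^m" using b0 bb by (intro power_mono) auto
  finally show ?thesis unfolding r_def .
qed

lemma frac_step:
  fixes a t :: real
  assumes "0 \<le> t" "t \<le> a" "0 < a"
  shows "0 \<le> (a - t) / a" "(a - t) / a \<le> (a + 1 - t) / (a + 1)"
  using assms by (auto simp: field_simps)

lemma closed_prob:
  fixes n K :: nat and R S :: "nat set"
  assumes n: "n \<ge> 2" and K: "K \<le> n - 1" and R: "R \<subseteq> {1..n}" and S: "S \<subseteq> R"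
  shows "measure_pmf.prob (selection_pmf n K) {G. closed_set G R S}
     \<le> (((real n - real (card R) + real (card S)) / real n)^K)^(card S) * ((1 - real (card S) / real n)^K)^(card R - card S)"
proof -
  define m where "m = card S"
  define r where "r = card R"
  define q1 where "q1 = ((real n - real r + real m) / real n)^K"
  define q2 where "q2 = (1 - real m / real n)^K"
  define p where "p = (\<lambda>i. pmf_of_set {T. T \<subseteq> {1..n} - {i} \<and> card T = K})"
  define B where "B = (\<lambda>i. if i \<in> S then {X. X \<inter> (R - S) = {}} else if i \<in> R - S then {X. X \<inter> S = {}} else (UNIV :: nat set set))"
  define f where "f = (\<lambda>i. if i \<in> S then q1 else if i \<in> R - S then q2 else (1::real))"
  have finR: "finite R" using R finite_subset by blast
  have finS: "finite S" using S finR finite_subset by blast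
  have mr: "m \<le> r" unfolding m_def r_def using S finR by (simp add: card_mono)
  have rn: "r \<le> n" unfolding r_def using R card_mono[of "{1..n}" R] by simp
  have npos: "real n > 0" using n by simp
  have sub: "{G. closed_set G R S} \<subseteq> Pi {1..n} B"
  proof
    fix G assume "G \<in> {G. closed_set G R S}"
    then have cl: "closed_set G R S" by simp
    show "G \<in> Pi {1..n} B"
    proof (rule Pi_I)
      fix i assume i: "i \<in> {1..n}"
      show "G i \<in> B i"
      proof (cases "i \<in> S")
        case True
        have "G i \<inter> (R - S) = {}"
        proof (rule ccontr)
          assume "G i \<inter> (R - S) \<noteq> {}"
          then obtain j where "j \<in> G i" "j \<in> R - S" by blast
          then have "kout_adj G i j" using True unfolding kout_adj_def by auto
          then show False using cl True \<open>j \<in> R - S\<close> unfolding closed_set_def by blast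
        qed
        then show ?thesis using True unfolding B_def by simp
      next
        case False
        show ?thesis
        proof (cases "i \<in> R - S")
          case True
          have "G i \<inter> S = {}"
          proof (rule ccontr)
            assume "G i \<inter> S \<noteq> {}"
            then obtain j where "j \<in> G i" "j \<in> S" by blast
            then have "kout_adj G j i" using True unfolding kout_adj_def by auto
            then show False using cl True \<open>j \<in> S\<close> unfolding closed_set_def by blast
          qed
          then show ?thesis using True False unfolding B_def by simp
        next
          case False2: False
          then show ?thesis using False unfolding B_def by simp
        qed
      qed
    qed
  qed
  have "measure_pmf.prob (selection_pmf n K) {G. closed_set G R S} \<le> measure_pmf.prob (selection_pmf n K) (Pi {1..n} B)"
    using sub by (intro measure_pmf.finite_measure_mono) auto
  also have "\<dots> = (\<Prod>i\<in>{1..n}. measure_pmf.prob (p i) (B i))"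
    unfolding selection_pmf_def p_def by (rule measure_Pi_pmf_Pi) simp
  also have "\<dots> \<le> (\<Prod>i\<in>{1..n}. f i)"
  proof (rule prod_mono)
    fix i assume i: "i \<in> {1..n}"
    define A where "A = {1..n} - {i}"
    have finA: "finite A" unfolding A_def by simp
    have cA: "card A = n - 1" unfolding A_def using i by simp
    have cAr: "real (card A) = real n - 1" using cA n by simp
    have KA: "K \<le> card A" using cA K by simp
    show "0 \<le> measure_pmf.prob (p i) (B i) \<and> measure_pmf.prob (p i) (B i) \<le> f i"
    proof (intro conjI)
      show "0 \<le> measure_pmf.prob (p i) (B i)" by simp
    next
      show "measure_pmf.prob (p i) (B i) \<le> f i"
      proof (cases "i \<in> S")
        case True
        have TA: "R - S \<subseteq> A" unfolding A_def using R True by auto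
        have cT: "card (R - S) = r - m" unfolding r_def m_def using S finS by (simp add: card_Diff_subset)
        have cTA: "card (R - S) \<le> card A" using TA finA card_mono by blast
        have "measure_pmf.prob (p i) (B i) = measure_pmf.prob (pmf_of_set {T. T \<subseteq> A \<and> card T = K}) {X. X \<inter> (R - S) = {}}"
          unfolding p_def B_def A_def using True by simp
        also have "\<dots> \<le> ((real (card A) - real (card (R - S))) / real (card A))^K"
          by (rule prob_avoid[OF finA TA KA])
        also have "\<dots> \<le> ((real (card A) + 1 - real (card (R - S))) / (real (card A) + 1))^K"
          using frac_step[of "real (card (R - S))" "real (card A)"] cTA cAr n
          by (intro power_mono) auto
        also have "\<dots> = q1" unfolding q1_def cAr cT using mr by (simp add: of_nat_diff algebra_simps)
        finally show ?thesis unfolding f_def using True by simp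
      next
        case False
        show ?thesis
        proof (cases "i \<in> R - S")
          case True
          have TA: "S \<subseteq> A" unfolding A_def using S R False by auto
          have cTA: "card S \<le> card A" using TA finA card_mono by blast
          have "measure_pmf.prob (p i) (B i) = measure_pmf.prob (pmf_of_set {T. T \<subseteq> A \<and> card T = K}) {X. X \<inter> S = {}}"
            unfolding p_def B_def A_def using True False by simp
          also have "\<dots> \<le> ((real (card A) - real (card S)) / real (card A))^K"
            by (rule prob_avoid[OF finA TA KA])
          also have "\<dots> \<le> ((real (card A) + 1 - real (card S)) / (real (card A) + 1))^K"
            using frac_step[of "real (card S)" "real (card A)"] cTA cAr n
            by (intro power_mono) auto
          also have "\<dots> = q2" unfolding q2_def cAr m_def using npos by (simp add: field_simps)
          finally show ?thesis unfolding f_def using True False by simp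
        next
          case False2: False
          then show ?thesis unfolding f_def using False by simp
        qed
      qed
    qed
  qed
  also have "(\<Prod>i\<in>{1..n}. f i) = q1^m * q2^(r - m)"
  proof -
    have "(\<Prod>i\<in>{1..n}. f i) = (\<Prod>i\<in>{1..n} - R. f i) * (\<Prod>i\<in>R. f i)"
      by (rule prod.subset_diff[OF R]) simp
    also have "(\<Prod>i\<in>{1..n} - R. f i) = 1" unfolding f_def using S by (intro prod.neutral) auto
    also have "(\<Prod>i\<in>R. f i) = (\<Prod>i\<in>R - S. f i) * (\<Prod>i\<in>S. f i)"
      by (rule prod.subset_diff[OF S finR])
    also have "(\<Prod>i\<in>R - S. f i) = (\<Prod>i\<in>R - S. q2)" unfolding f_def by (intro prod.cong) auto
    also have "(\<Prod>i\<in>S. f i) = (\<Prod>i\<in>S. q1)" unfolding f_def by (intro prod.cong) auto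
    finally have "(\<Prod>i\<in>{1..n}. f i) = 1 * ((\<Prod>i\<in>R - S. q2) * (\<Prod>i\<in>S. q1))" .
    moreover have "card (R - S) = r - m" unfolding r_def m_def using S finS by (simp add: card_Diff_subset)
    ultimately show ?thesis unfolding m_def by simp
  qed
  finally show ?thesis unfolding q1_def q2_def m_def r_def .
qed

lemma deletion_set:
  assumes "g \<le> n" "D \<in> set_pmf (deletion_pmf n g)"
  shows "D \<subseteq> {1..n}" "card D = g"
proof -
  define F where "F = {D. D \<subseteq> {1..n} \<and> card D = g}"
  have finF: "finite F" unfolding F_def by (rule finite_subset[of _ "Pow {1..n}"]) auto
  have "card F = card {1..n} choose g" unfolding F_def by (rule n_subsets) simp
  then have "card F > 0" using assms(1) by simp
  then have "F \<noteq> {}" by auto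
  then have "set_pmf (deletion_pmf n g) = F" unfolding deletion_pmf_def F_def[symmetric] using finF by simp
  then show "D \<subseteq> {1..n}" "card D = g" using assms(2) unfolding F_def by auto
qed

lemma main_bound:
  fixes n K g :: nat and lam :: real
  assumes n: "n \<ge> 2" and K: "K < n" and K2: "K \<ge> 2" and gn: "real g \<le> real n / 1000"
    and lam: "lam > 0" and X: "1 + real g / lam \<le> (2 * exp (1/2))^(K - 1)"
    and D: "D \<in> set_pmf (deletion_pmf n g)"
  shows "measure_pmf.prob (selection_pmf n K) {G. real (cmax_size G ({1..n} - D)) \<le> real n - real g - lam}
          \<le> (real n + 1) * (9/10) powr (lam / 2)"
proof -
  have gle: "g \<le> n" using gn n by simp
  have Dsub: "D \<subseteq> {1..n}" and cD: "card D = g" using deletion_set[OF gle D] by auto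
  define R where "R = {1..n} - D"
  define r where "r = card R"
  have finR: "finite R" unfolding R_def by simp
  have Rsub: "R \<subseteq> {1..n}" unfolding R_def by auto
  have rdef: "r = n - g" unfolding r_def R_def using Dsub cD by (simp add: card_Diff_subset finite_subset)
  have rr: "real r = real n - real g" using rdef gle by simp
  define Ev where "Ev = {G. real (cmax_size G R) \<le> real r - lam}"
  have evq: "{G. real (cmax_size G ({1..n} - D)) \<le> real n - real g - lam} = Ev"
    unfolding Ev_def R_def[symmetric] rr by simp
  have bnd0: "0 \<le> (real n + 1) * (9/10::real) powr (lam / 2)" by simp
  show ?thesis
  proof (cases "lam \<le> real r")
    case False
    have "Ev = {}" unfolding Ev_def using False by auto
    then show ?thesis unfolding evq using bnd0 by simp
  next
    case True
    define SS where "SS = {S. S \<subseteq> R \<and> lam \<le> 2 * real (card S) \<and> 2 * card S \<le> card R}"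
    define h where "h = (\<lambda>m::nat. (((real n - real r + real m) / real n)^K)^m * ((1 - real m / real n)^K)^(r - m))"
    define bnd where "bnd = (9/10::real) powr (lam / 2)"
    have finSS: "finite SS" unfolding SS_def using finR by (rule_tac finite_subset[of _ "Pow R"]) auto
    have sub: "Ev \<subseteq> (\<Union>S\<in>SS. {G. closed_set G R S})"
    proof
      fix G assume "G \<in> Ev"
      then have cm: "real (cmax_size G R) \<le> real r - lam" unfolding Ev_def by simp
      have "\<forall>v\<in>R. real (card (component G R v)) \<le> real (card R) - lam"
      proof
        fix v assume v: "v \<in> R"
        have "card (component G R v) \<le> cmax_size G R"
          unfolding cmax_size_def using v finR by (intro Max_ge) auto
        then show "real (card (component G R v)) \<le> real (card R) - lam" using cm unfolding r_def by simp
      qed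
      then obtain S where "closed_set G R S" "lam \<le> 2 * real (card S)" "2 * card S \<le> card R"
        using exists_closed[OF finR lam] True unfolding r_def by blast
      moreover then have "S \<subseteq> R" unfolding closed_set_def by simp
      ultimately show "G \<in> (\<Union>S\<in>SS. {G. closed_set G R S})" unfolding SS_def by blast
    qed
    have "measure_pmf.prob (selection_pmf n K) Ev \<le> measure_pmf.prob (selection_pmf n K) (\<Union>S\<in>SS. {G. closed_set G R S})"
      using sub by (intro measure_pmf.finite_measure_mono) auto
    also have "\<dots> \<le> (\<Sum>S\<in>SS. measure_pmf.prob (selection_pmf n K) {G. closed_set G R S})"
      using finSS by (intro measure_pmf.finite_measure_subadditive_finite) auto
    also have "\<dots> \<le> (\<Sum>S\<in>SS. h (card S))"
    proof (rule sum_mono)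
      fix S assume "S \<in> SS"
      then have "S \<subseteq> R" unfolding SS_def by simp
      then show "measure_pmf.prob (selection_pmf n K) {G. closed_set G R S} \<le> h (card S)"
        unfolding h_def r_def using closed_prob[OF n _ Rsub] K by simp
    qed
    also have "\<dots> = (\<Sum>m\<in>{0..r}. (\<Sum>S\<in>{S \<in> SS. card S = m}. h (card S)))"
    proof (rule sum.group[symmetric, OF finSS])
      show "finite {0..r}" by simp
      show "card ` SS \<subseteq> {0..r}" unfolding SS_def r_def using finR by (auto intro: card_mono)
    qed
    also have "\<dots> \<le> (\<Sum>m\<in>{0..r}. bnd)"
    proof (rule sum_mono)
      fix m assume "m \<in> {0..r}"
      show "(\<Sum>S\<in>{S \<in> SS. card S = m}. h (card S)) \<le> bnd"
      proof (cases "lam \<le> 2 * real m \<and> 2 * m \<le> r")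
        case False
        then have e: "{S \<in> SS. card S = m} = {}" unfolding SS_def r_def by auto
        show ?thesis unfolding bnd_def e by simp
      next
        case True2: True
        have eqS: "{S \<in> SS. card S = m} = {S. S \<subseteq> R \<and> card S = m}"
          unfolding SS_def r_def using True2 unfolding r_def by auto
        have cS: "card {S \<in> SS. card S = m} = r choose m"
          unfolding eqS r_def by (rule n_subsets[OF finR])
        have m1: "m \<ge> 1" using True2 lam by (cases m) auto
        have "(\<Sum>S\<in>{S \<in> SS. card S = m}. h (card S)) = (\<Sum>S\<in>{S \<in> SS. card S = m}. h m)"
          by (intro sum.cong) auto
        also have "\<dots> = real (r choose m) * h m" using cS by simp
        also have "\<dots> \<le> (9/10)^m"
        proof -
          have "real (r choose m) * h m = real ((n - g) choose m) * (((real g + real m) / real n)^K)^m * ((1 - real m / real n)^K)^(n - g - m)"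
            unfolding h_def rdef using rr rdef by (simp add: mult.assoc)
          also have "\<dots> \<le> (9/10)^m"
            using key_ineq[of n m g K lam] n m1 True2 rdef gn K2 lam X by simp
          finally show ?thesis .
        qed
        also have "\<dots> \<le> bnd"
        proof -
          have "(9/10::real)^m = (9/10) powr (real m)" by (simp add: powr_realpow)
          also have "\<dots> \<le> (9/10) powr (lam / 2)" using True2 by (intro powr_mono') auto
          finally show ?thesis unfolding bnd_def .
        qed
        finally show ?thesis .
      qed
    qed
    also have "\<dots> = (real r + 1) * bnd" by simp
    also have "\<dots> \<le> (real n + 1) * bnd" unfolding bnd_def using rr by (intro mult_right_mono) auto
    finally show ?thesis unfolding evq bnd_def .
  qed
qed

lemma r3_X:
  fixes K g :: nat and lam :: real
  assumes lam: "lam > 0" and r: "real K > r3 (real g) lam"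
  shows "K \<ge> 2" "1 + real g / lam \<le> (2 * exp (1/2))^(K - 1)"
proof -
  define c where "c = (ln 2 + 1/2 :: real)"
  have l2: "0 < ln (2::real)" by (rule ln_gt_zero) simp
  have c0: "c > 0" unfolding c_def using l2 by linarith
  have X0: "1 + real g / lam \<ge> 1" using lam by simp
  have l0: "ln (1 + real g / lam) \<ge> 0" using X0 by simp
  have rK: "real K > 1 + ln (1 + real g / lam) / c" using r unfolding r3_def c_def by simp
  then have "real K > 1" using l0 c0 by (smt (verit) divide_nonneg_pos)
  then show K2: "K \<ge> 2" by simp
  have "ln (1 + real g / lam) / c < real K - 1" using rK by simp
  then have "ln (1 + real g / lam) < (real K - 1) * c" using c0 by (simp add: divide_less_eq)
  then have "exp (ln (1 + real g / lam)) < exp ((real K - 1) * c)" by simp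
  then have "1 + real g / lam < exp (real (K - 1) * c)" using X0 K2 by (simp add: of_nat_diff)
  also have "exp (real (K - 1) * c) = (exp c)^(K - 1)" by (simp add: exp_of_nat_mult)
  also have "exp c = 2 * exp (1/2)" unfolding c_def by (simp add: exp_add)
  finally show "1 + real g / lam \<le> (2 * exp (1/2))^(K - 1)" by simp
qed

lemma exp_neg_le: fixes y :: real assumes "y > 0" shows "exp (- y) \<le> 24 / y^4"
proof -
  have "y^4 / fact 4 \<le> exp y" using pow_fact_le_exp[of y 4] assms by simp
  then have "y^4 / 24 \<le> exp y" by (simp add: fact_numeral)
  then have "y^4 \<le> 24 * exp y" by simp
  then show ?thesis using assms by (simp add: exp_minus field_simps)
qed

theorem theorem3p3:
  fixes gam :: "nat \<Rightarrow> nat" and lam :: "nat \<Rightarrow> real" and K :: "nat \<Rightarrow> nat"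
  assumes "(\<lambda>n. real (gam n)) \<in> o(\<lambda>n. real n)"
    and "lam \<in> \<Omega>(\<lambda>n. sqrt (real n))"
    and "\<forall>n. lam n > 0"
    and "eventually (\<lambda>n. K n < n) sequentially"
    and "\<forall>n. real (K n) > r3 (real (gam n)) (lam n)"
  shows "(\<lambda>n. prob_cmax_gt n (K n) (gam n) (real n - real (gam n) - lam n)) \<longlonglongrightarrow> 1"
proof -
  obtain c where c: "c > 0" and evc: "eventually (\<lambda>n. norm (lam n) \<ge> c * norm (sqrt (real n))) sequentially"
    using assms(2) by (elim landau_omega.bigE) auto
  have evg: "eventually (\<lambda>n. norm (real (gam n)) \<le> (1/1000) * norm (real n)) sequentially"
    using landau_o.smallD[OF assms(1), of "1/1000"] by simp
  define L where "L = ln (10/9::real)"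
  have L0: "L > 0" unfolding L_def by simp
  define a where "a = c * L / 2"
  have a0: "a > 0" unfolding a_def using c L0 by simp
  define eps where "eps = (\<lambda>n::nat. (24 / a^4) * ((real n + 1) / (real n)^2))"
  have eps0: "eps \<longlonglongrightarrow> 0"
  proof -
    have "(\<lambda>n::nat. (real n + 1) / (real n)^2) \<longlonglongrightarrow> 0"
    proof (rule tendsto_sandwich[of "\<lambda>_. 0" _ _ "\<lambda>n. 2 / real n"])
      show "eventually (\<lambda>n. 0 \<le> (real n + 1) / (real n)^2) sequentially" by simp
      show "eventually (\<lambda>n. (real n + 1) / (real n)^2 \<le> 2 / real n) sequentially"
        using eventually_ge_at_top[of "1::nat"]
        by eventually_elim (simp add: field_simps power2_eq_square)
      show "(\<lambda>n. 0::real) \<longlonglongrightarrow> 0" by simp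
      show "(\<lambda>n. 2 / real n) \<longlonglongrightarrow> 0" by (rule lim_const_over_n)
    qed
    then show ?thesis unfolding eps_def by (rule tendsto_mult_right_zero)
  qed
  define P where "P = (\<lambda>n. prob_cmax_gt n (K n) (gam n) (real n - real (gam n) - lam n))"
  have ev: "eventually (\<lambda>n. 1 - eps n \<le> P n) sequentially"
    using evc evg assms(4) eventually_ge_at_top[of "2::nat"]
  proof eventually_elim
    case (elim n)
    have lamn: "lam n > 0" using assms(3) by simp
    have lamc: "lam n \<ge> c * sqrt (real n)" using elim(1) lamn by simp
    have gn: "real (gam n) \<le> real n / 1000" using elim(2) by simp
    have K2: "K n \<ge> 2" and X: "1 + real (gam n) / lam n \<le> (2 * exp (1/2))^(K n - 1)"
      using r3_X[OF lamn assms(5)[rule_format, of n]] by auto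
    define A where "A = {(G, D). real (cmax_size G ({1..n} - D)) > real n - real (gam n) - lam n}"
    have "measure_pmf.prob (pair_pmf (selection_pmf n (K n)) (deletion_pmf n (gam n))) (UNIV - A)
          \<le> (real n + 1) * (9/10) powr (lam n / 2)"
    proof (rule pair_bound)
      fix D assume D: "D \<in> set_pmf (deletion_pmf n (gam n))"
      have "{G. (G, D) \<in> UNIV - A} = {G. real (cmax_size G ({1..n} - D)) \<le> real n - real (gam n) - lam n}"
        unfolding A_def by auto
      then show "measure_pmf.prob (selection_pmf n (K n)) {G. (G, D) \<in> UNIV - A} \<le> (real n + 1) * (9/10) powr (lam n / 2)"
        using main_bound[OF elim(4) elim(3) K2 gn lamn X D] by simp
    qed
    also have "(real n + 1) * (9/10) powr (lam n / 2) \<le> eps n"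
    proof -
      have "(9/10::real) powr (lam n / 2) \<le> (9/10) powr (c * sqrt (real n) / 2)"
        using lamc by (intro powr_mono') auto
      also have "\<dots> = exp (- (a * sqrt (real n)))"
      proof -
        have "ln (9/10::real) = - L" unfolding L_def by (simp add: ln_div)
        then show ?thesis unfolding powr_def a_def by (simp add: field_simps)
      qed
      also have "\<dots> \<le> 24 / (a * sqrt (real n))^4"
        using a0 elim(4) by (intro exp_neg_le) simp
      also have "(a * sqrt (real n))^4 = a^4 * (real n)^2"
      proof -
        have "(sqrt (real n))^4 = (real n)^2"
          by (metis (no_types) of_nat_0_le_iff power_mult real_sqrt_pow2 numeral_Bit0 mult_2 numeral_One power2_eq_square power_one_right)
        then show ?thesis by (simp add: power_mult_distrib)
      qed
      finally have "(9/10::real) powr (lam n / 2) \<le> 24 / (a^4 * (real n)^2)" .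
      then have "(real n + 1) * (9/10) powr (lam n / 2) \<le> (real n + 1) * (24 / (a^4 * (real n)^2))"
        by (intro mult_left_mono) auto
      also have "\<dots> = eps n" unfolding eps_def by (simp add: field_simps)
      finally show ?thesis .
    qed
    finally have cb: "measure_pmf.prob (pair_pmf (selection_pmf n (K n)) (deletion_pmf n (gam n))) (UNIV - A) \<le> eps n" .
    have "P n = measure_pmf.prob (pair_pmf (selection_pmf n (K n)) (deletion_pmf n (gam n))) A"
      unfolding P_def prob_cmax_gt_def A_def by simp
    also have "\<dots> = 1 - measure_pmf.prob (pair_pmf (selection_pmf n (K n)) (deletion_pmf n (gam n))) (UNIV - A)"
      using measure_pmf.prob_compl[of A "pair_pmf (selection_pmf n (K n)) (deletion_pmf n (gam n))"] by simp
    finally show ?case using cb by simp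
  qed
  have "P \<longlonglongrightarrow> 1"
  proof (rule tendsto_sandwich[of "\<lambda>n. 1 - eps n" _ _ "\<lambda>_. 1"])
    show "eventually (\<lambda>n. 1 - eps n \<le> P n) sequentially" by (rule ev)
    show "eventually (\<lambda>n. P n \<le> 1) sequentially" unfolding P_def prob_cmax_gt_def by simp
    show "(\<lambda>n. 1 - eps n) \<longlonglongrightarrow> 1" using tendsto_diff[OF tendsto_const eps0, of 1] by simp
    show "(\<lambda>n. 1::real) \<longlonglongrightarrow> 1" by simp
  qed
  then show ?thesis unfolding P_def .
qed

end
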